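(* The linear span of $\{h_k:k\geq2\}$ is dense in $H^2$ with respect to the compact-open topology: for every $f\in H^2$ there is a sequence $(p_j)$ in $\mathrm{span}\{h_k:k\ge2\}$ converging to $f$ uniformly on compact subsets of $\mathbb{D}$.
   Context: $\mathbb{D}$ is the open unit disk and $H^2$ the Hardy space on $\mathbb{D}$. For $k\geq 2$, $h_k(z)=\frac{1}{1-z}\big(\mathrm{Log}(1-z^k)-\mathrm{Log}(1-z)-\ln k\big)$ with $\mathrm{Log}$ the principal branch. *)

theory Defs
  imports "HOL-Complex_Analysis.Complex_Analysis"
begin

definition hardy2 :: "(complex \<Rightarrow> complex) set" where
  "hardy2 = {f. f holomorphic_on ball 0 1 \<and>
     (\<exists>B. \<forall>r. 0 < r \<and> r < 1 \<longrightarrow>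
        integral {0..2*pi} (\<lambda>t. (cmod (f (complex_of_real r * exp (\<i> * complex_of_real t))))\<^sup>2) \<le> B)}"

definition hk :: "nat \<Rightarrow> complex \<Rightarrow> complex" where
  "hk k z = (Ln (1 - z ^ k) - Ln (1 - z) - complex_of_real (ln (real k))) / (1 - z)"

definition span_hk :: "(complex \<Rightarrow> complex) set" where
  "span_hk = {p. \<exists>S c. finite S \<and> S \<subseteq> {2..} \<and>
                  p = (\<lambda>z. \<Sum>k\<in>S. c k * hk k z)}"

end

theory Submission
  imports Defs
begin

lemma span_zero: "(\<lambda>z. 0) \<in> span_hk"
  unfolding span_hk_def by (rule CollectI, rule exI[of _ "{}"], rule exI[of _ "\<lambda>_. 0"]) simp

lemma span_hk1: "k \<ge> 2 \<Longrightarrow> (\<lambda>z. a * hk k z) \<in> span_hk"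
  unfolding span_hk_def by (rule CollectI, rule exI[of _ "{k}"], rule exI[of _ "\<lambda>_. a"]) simp

lemma span_add:
  assumes "p \<in> span_hk" "q \<in> span_hk"
  shows "(\<lambda>z. p z + q z) \<in> span_hk"
proof -
  obtain S1 c1 where 1: "finite S1" "S1 \<subseteq> {2..}" "p = (\<lambda>z. \<Sum>k\<in>S1. c1 k * hk k z)"
    using assms(1) unfolding span_hk_def by blast
  obtain S2 c2 where 2: "finite S2" "S2 \<subseteq> {2..}" "q = (\<lambda>z. \<Sum>k\<in>S2. c2 k * hk k z)"
    using assms(2) unfolding span_hk_def by blast
  let ?c = "\<lambda>k. (if k \<in> S1 then c1 k else 0) + (if k \<in> S2 then c2 k else 0)"
  have "(\<lambda>z. p z + q z) = (\<lambda>z. \<Sum>k\<in>S1 \<union> S2. ?c k * hk k z)"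
  proof
    fix z
    have "(\<Sum>k\<in>S1 \<union> S2. ?c k * hk k z) =
          (\<Sum>k\<in>S1 \<union> S2. (if k \<in> S1 then c1 k * hk k z else 0)) +
          (\<Sum>k\<in>S1 \<union> S2. (if k \<in> S2 then c2 k * hk k z else 0))"
      by (subst sum.distrib[symmetric], rule sum.cong) (auto simp: distrib_right)
    also have "\<dots> = (\<Sum>k\<in>S1. c1 k * hk k z) + (\<Sum>k\<in>S2. c2 k * hk k z)"
    proof -
      have e: "(S1\<union>S2)\<inter>S1 = S1" "(S1\<union>S2)\<inter>S2 = S2" by auto
      have f: "finite (S1 \<union> S2)" using 1 2 by simp
      have a1: "(\<Sum>k\<in>S1 \<union> S2. (if k \<in> S1 then c1 k * hk k z else 0)) = (\<Sum>k\<in>(S1 \<union> S2) \<inter> S1. c1 k * hk k z)"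
        by (rule sum.inter_restrict[OF f, symmetric])
      have a2: "(\<Sum>k\<in>S1 \<union> S2. (if k \<in> S2 then c2 k * hk k z else 0)) = (\<Sum>k\<in>(S1 \<union> S2) \<inter> S2. c2 k * hk k z)"
        by (rule sum.inter_restrict[OF f, symmetric])
      show ?thesis unfolding a1 a2 e ..
    qed
    finally show "p z + q z = (\<Sum>k\<in>S1 \<union> S2. ?c k * hk k z)" unfolding 1(3) 2(3) by simp
  qed
  moreover have "finite (S1 \<union> S2)" "S1 \<union> S2 \<subseteq> {2..}" using 1 2 by auto
  ultimately show ?thesis unfolding span_hk_def
    by (intro CollectI exI[of _ "S1 \<union> S2"] exI[of _ ?c] conjI)
qed

lemma span_scale:
  assumes "p \<in> span_hk"
  shows "(\<lambda>z. a * p z) \<in> span_hk"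
proof -
  obtain S1 c1 where 1: "finite S1" "S1 \<subseteq> {2..}" "p = (\<lambda>z. \<Sum>k\<in>S1. c1 k * hk k z)"
    using assms(1) unfolding span_hk_def by blast
  have "(\<lambda>z. a * p z) = (\<lambda>z. \<Sum>k\<in>S1. (a * c1 k) * hk k z)"
    using 1 by (simp add: sum_distrib_left mult.assoc)
  then show ?thesis unfolding span_hk_def using 1
    by (intro CollectI exI[of _ S1] exI[of _ "\<lambda>k. a * c1 k"] conjI)
qed

definition near :: "real \<Rightarrow> (complex \<Rightarrow> complex) \<Rightarrow> real \<Rightarrow> bool" where
  "near r g e \<longleftrightarrow> (\<forall>\<epsilon>>0. \<exists>p\<in>span_hk. \<forall>z\<in>cball 0 r. cmod (p z - g z) \<le> e + \<epsilon>)"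

lemma nearD:
  assumes "near r g e" "\<epsilon> > 0"
  shows "\<exists>p\<in>span_hk. \<forall>z\<in>cball 0 r. cmod (p z - g z) \<le> e + \<epsilon>"
  using assms unfolding near_def by simp

lemma nearI:
  assumes "\<And>\<epsilon>. \<epsilon> > 0 \<Longrightarrow> \<exists>p\<in>span_hk. \<forall>z\<in>cball 0 r. cmod (p z - g z) \<le> e + \<epsilon>"
  shows "near r g e"
  unfolding near_def using assms by simp

lemma near_mono:
  assumes "near r g e" "e \<le> e'" shows "near r g e'"
proof (rule nearI)
  fix \<epsilon> :: real assume "\<epsilon> > 0"
  obtain p where p0: "p \<in> span_hk" "\<forall>z\<in>cball 0 r. cmod (p z - g z) \<le> e + \<epsilon>"
    using nearD[OF assms(1) \<open>\<epsilon> > 0\<close>] ..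
  note p = p0(1) bspec[OF p0(2)]
  have "\<forall>z\<in>cball 0 r. cmod (p z - g z) \<le> e' + \<epsilon>"
  proof
    fix z :: complex assume "z \<in> cball 0 r"
    then show "cmod (p z - g z) \<le> e' + \<epsilon>" using p(2)[of z] assms(2) by linarith
  qed
  then show "\<exists>p\<in>span_hk. \<forall>z\<in>cball 0 r. cmod (p z - g z) \<le> e' + \<epsilon>" using p(1) ..
qed

lemma near_limit: assumes "\<And>d. d > 0 \<Longrightarrow> near r g (e + d)" shows "near r g e"
proof (rule nearI)
  fix \<epsilon> :: real assume "\<epsilon> > 0"
  then have h: "\<epsilon>/2 > 0" by simp
  obtain p where p0: "p \<in> span_hk" "\<forall>z\<in>cball 0 r. cmod (p z - g z) \<le> e + \<epsilon>/2 + \<epsilon>/2"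
    using nearD[OF assms[OF h] h] ..
  note p = p0(1) bspec[OF p0(2)]
  have "\<forall>z\<in>cball 0 r. cmod (p z - g z) \<le> e + \<epsilon>"
  proof
    fix z :: complex assume "z \<in> cball 0 r"
    then show "cmod (p z - g z) \<le> e + \<epsilon>" using p(2)[of z] by linarith
  qed
  then show "\<exists>p\<in>span_hk. \<forall>z\<in>cball 0 r. cmod (p z - g z) \<le> e + \<epsilon>" using p(1) ..
qed

lemma near_span: assumes "p \<in> span_hk" shows "near r p 0"
proof (rule nearI)
  fix \<epsilon> :: real assume "\<epsilon> > 0"
  then have "\<forall>z\<in>cball 0 r. cmod (p z - p z) \<le> 0 + \<epsilon>" by simp
  then show "\<exists>q\<in>span_hk. \<forall>z\<in>cball 0 r. cmod (q z - p z) \<le> 0 + \<epsilon>" using assms ..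
qed

lemma near_zero: assumes "\<And>z. z \<in> cball 0 r \<Longrightarrow> cmod (g z) \<le> d" shows "near r g d"
proof (rule nearI)
  fix \<epsilon> :: real assume "\<epsilon> > 0"
  have "\<forall>z\<in>cball 0 r. cmod ((\<lambda>z. 0) z - g z) \<le> d + \<epsilon>"
  proof
    fix z :: complex assume "z \<in> cball 0 r"
    then show "cmod ((\<lambda>z. 0) z - g z) \<le> d + \<epsilon>" using assms[of z] \<open>\<epsilon> > 0\<close> by simp
  qed
  then show "\<exists>q\<in>span_hk. \<forall>z\<in>cball 0 r. cmod (q z - g z) \<le> d + \<epsilon>" using span_zero ..
qed

lemma near_add:
  assumes "near r g e1" "near r h e2"
  shows "near r (\<lambda>z. g z + h z) (e1 + e2)"
proof (rule nearI)
  fix \<epsilon> :: real assume "\<epsilon> > 0"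
  then have h: "\<epsilon>/2 > 0" by simp
  obtain p where p0: "p \<in> span_hk" "\<forall>z\<in>cball 0 r. cmod (p z - g z) \<le> e1 + \<epsilon>/2"
    using nearD[OF assms(1) h] ..
  note p = p0(1) bspec[OF p0(2)]
  obtain q where q0: "q \<in> span_hk" "\<forall>z\<in>cball 0 r. cmod (q z - h z) \<le> e2 + \<epsilon>/2"
    using nearD[OF assms(2) h] ..
  note q = q0(1) bspec[OF q0(2)]
  have "\<forall>z\<in>cball 0 r. cmod ((\<lambda>z. p z + q z) z - (g z + h z)) \<le> e1 + e2 + \<epsilon>"
  proof
    fix z :: complex assume z: "z \<in> cball 0 r"
    have "cmod ((p z + q z) - (g z + h z)) \<le> cmod (p z - g z) + cmod (q z - h z)"
      by (metis add_diff_add norm_triangle_ineq)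
    then show "cmod ((\<lambda>z. p z + q z) z - (g z + h z)) \<le> e1 + e2 + \<epsilon>"
      using p(2)[OF z] q(2)[OF z] by simp
  qed
  then show "\<exists>p\<in>span_hk. \<forall>z\<in>cball 0 r. cmod (p z - (g z + h z)) \<le> e1 + e2 + \<epsilon>"
    using span_add[OF p(1) q(1)] ..
qed

lemma near_scale:
  assumes "near r g e"
  shows "near r (\<lambda>z. a * g z) (cmod a * e)"
proof (rule nearI)
  fix \<epsilon> :: real assume "\<epsilon> > 0"
  have pos: "\<epsilon> / (cmod a + 1) > 0" using \<open>\<epsilon> > 0\<close> norm_ge_zero[of a] by (intro divide_pos_pos) linarith+
  obtain p where p0: "p \<in> span_hk" "\<forall>z\<in>cball 0 r. cmod (p z - g z) \<le> e + \<epsilon> / (cmod a + 1)"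
    using nearD[OF assms pos] ..
  note p = p0(1) bspec[OF p0(2)]
  have le1: "cmod a / (cmod a + 1) \<le> 1" using norm_ge_zero[of a] by (simp add: divide_le_eq add_nonneg_pos)
  have "\<forall>z\<in>cball 0 r. cmod ((\<lambda>z. a * p z) z - a * g z) \<le> cmod a * e + \<epsilon>"
  proof
    fix z assume z: "z \<in> cball (0::complex) r"
    have "cmod (a * p z - a * g z) = cmod a * cmod (p z - g z)"
      by (metis norm_mult right_diff_distrib)
    also have "\<dots> \<le> cmod a * (e + \<epsilon> / (cmod a + 1))"
      using p(2)[OF z] by (simp add: mult_left_mono)
    also have "\<dots> = cmod a * e + \<epsilon> * (cmod a / (cmod a + 1))"
      by (simp add: algebra_simps)
    also have "\<dots> \<le> cmod a * e + \<epsilon> * 1"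
      using \<open>\<epsilon> > 0\<close> le1 by (intro add_left_mono mult_left_mono) auto
    finally show "cmod ((\<lambda>z. a * p z) z - a * g z) \<le> cmod a * e + \<epsilon>" by simp
  qed
  then show "\<exists>p\<in>span_hk. \<forall>z\<in>cball 0 r. cmod (p z - a * g z) \<le> cmod a * e + \<epsilon>"
    using span_scale[OF p(1)] ..
qed
lemma near_close:
  assumes "near r g e" "\<And>z. z \<in> cball 0 r \<Longrightarrow> cmod (g z - h z) \<le> d"
  shows "near r h (e + d)"
proof -
  have "near r (\<lambda>z. g z + (h z - g z)) (e + d)"
  proof (rule near_add[OF assms(1)])
    show "near r (\<lambda>z. h z - g z) d"
    proof (rule near_zero)
      fix z :: complex assume "z \<in> cball 0 r"
      then show "cmod (h z - g z) \<le> d" using assms(2) by (simp add: norm_minus_commute)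
    qed
  qed
  then show ?thesis by simp
qed

lemma near_cong:
  assumes "near r g e" "\<And>z. z \<in> cball 0 r \<Longrightarrow> g z = h z"
  shows "near r h e"
proof -
  have "near r h (e + 0)"
    by (rule near_close[OF assms(1)]) (use assms(2) in simp)
  then show ?thesis by simp
qed

lemma near_sum:
  assumes "finite I" "\<And>i. i \<in> I \<Longrightarrow> near r (g i) (e i)"
  shows "near r (\<lambda>z. \<Sum>i\<in>I. g i z) (\<Sum>i\<in>I. e i)"
  using assms
proof (induction I rule: finite_induct)
  case empty
  then show ?case by (simp add: near_zero)
next
  case (insert x F)
  have "near r (\<lambda>z. g x z + (\<Sum>i\<in>F. g i z)) (e x + (\<Sum>i\<in>F. e i))"
    by (rule near_add) (use insert in auto)
  then show ?case using insert by simp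
qed

lemma pow_small:
  fixes r c :: real
  assumes "0 \<le> r" "r < 1" "c > 0"
  shows "\<exists>k\<ge>K0. r^k < c"
proof -
  have "(\<lambda>n. r^n) \<longlonglongrightarrow> 0" using assms by (intro LIMSEQ_realpow_zero) auto
  then have "eventually (\<lambda>n. r^n < c) sequentially" using assms(3) by (rule order_tendstoD(2))
  then obtain N where "\<forall>n\<ge>N. r^n < c" by (auto simp: eventually_sequentially)
  then show ?thesis by (intro exI[of _ "max N K0"]) auto
qed

lemma Ln_small:
  assumes "z \<in> cball (0::complex) r" "0 \<le> r" "k \<ge> 1" "r^k < 1/2"
  shows "cmod (Ln (1 - z^k)) \<le> 2 * r^k"
proof -
  have "cmod z \<le> r" using assms(1) by simp
  then have nz: "cmod (- (z^k)) \<le> r^k" by (simp add: norm_power power_mono)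
  then have "cmod (Ln (1 + - (z^k))) \<le> 2 * cmod (- (z^k))" using assms(4)
    by (intro norm_Ln_le) linarith
  then show ?thesis using nz by simp
qed

lemma div_bound:
  assumes "z \<in> cball (0::complex) r" "r < 1"
  shows "1 - z \<noteq> 0" "cmod (a / (1 - z)) \<le> cmod a / (1 - r)"
proof -
  have "cmod z \<le> r" using assms(1) by simp
  have "1 - r \<le> 1 - cmod z" using \<open>cmod z \<le> r\<close> by simp
  also have "\<dots> \<le> cmod (1 - z)" by (metis norm_one norm_triangle_ineq2)
  finally have le: "1 - r \<le> cmod (1 - z)" .
  then show "1 - z \<noteq> 0" using assms(2) by auto
  show "cmod (a / (1 - z)) \<le> cmod a / (1 - r)"
    using le assms(2) by (simp add: norm_divide frac_le)
qed

lemma Ln_series_bound: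
  fixes w :: complex
  assumes "norm w < 1"
  shows "norm (Ln (1 - w) + (\<Sum>k=1..n. w ^ k / of_nat k)) \<le> norm w ^ Suc n / (1 - norm w)"
proof (cases "w = 0")
  case True
  have "(\<Sum>k=1..n. w ^ k / of_nat k) = 0" using True by (intro sum.neutral) auto
  then show ?thesis using True by simp
next
  case False
  have summable: "summable (\<lambda>k. norm w ^ k / real (k + Suc n))"
  proof (rule summable_comparison_test[OF _ summable_geometric[of "norm w"]])
    show "\<exists>N. \<forall>k\<ge>N. norm (norm w ^ k / real (k + Suc n)) \<le> norm w ^ k"
    proof (intro exI allI impI)
      fix k :: nat
      show "norm (norm w ^ k / real (k + Suc n)) \<le> norm w ^ k"
        using divide_left_mono[of 1 "real (k + Suc n)" "norm w ^ k"] by simp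
    qed
  qed (use assms in auto)
  have "(\<lambda>k. w ^ k / of_nat k) sums - Ln (1 - w)"
    using sums_minus[OF Ln_series[of "-w"]] assms by (simp add: power_minus')
  hence "(\<lambda>k. w ^ (k + Suc n) / of_nat (k + Suc n)) sums (- Ln (1 - w) - (\<Sum>k<Suc n. w ^ k / of_nat k))"
    by (intro sums_split_initial_segment)
  also have "(\<Sum>k<Suc n. w ^ k / of_nat k) = (\<Sum>k=1..n. w ^ k / of_nat k)"
    by (intro sum.mono_neutral_right) auto
  finally have S: "(\<lambda>k. w ^ (k + Suc n) / of_nat (k + Suc n)) sums (- Ln (1 - w) - (\<Sum>k=1..n. w ^ k / of_nat k))" .
  have "norm (Ln (1 - w) + (\<Sum>k=1..n. w ^ k / of_nat k)) =
                norm (\<Sum>k. w ^ (k + Suc n) / of_nat (k + Suc n))"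
    using S by (simp add: sums_iff norm_uminus_minus)
  also have "\<dots> \<le> (\<Sum>k. norm (w ^ (k + Suc n) / of_nat (k + Suc n)))"
  proof (rule summable_norm)
    have "summable (\<lambda>k. norm w ^ Suc n * (norm w ^ k / real (k + Suc n)))"
      using summable by (rule summable_mult)
    then show "summable (\<lambda>k. norm (w ^ (k + Suc n) / of_nat (k + Suc n)))"
      by (simp add: norm_divide norm_power norm_mult power_add mult_ac del: of_nat_add of_nat_Suc)
  qed
  also have "\<dots> = (\<Sum>k. norm w ^ Suc n * (norm w ^ k / real (k + Suc n)))"
    by (simp add: algebra_simps norm_mult norm_power norm_divide power_add del: of_nat_add of_nat_Suc)
  also have "\<dots> = norm w ^ Suc n * (\<Sum>k. norm w ^ k / real (k + Suc n))"
    by (intro suminf_mult summable)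
  also have "\<dots> \<le> norm w ^ Suc n * (1 / (1 - norm w))"
  proof (intro mult_left_mono[OF sums_le])
    show "(\<lambda>k. norm w ^ k / real (k + Suc n)) sums (\<Sum>k. norm w ^ k / real (k + Suc n))"
      using summable by blast
    show "(\<lambda>k. norm w ^ k) sums (1 / (1 - norm w))"
      by (rule geometric_sums) (use assms in auto)
  qed (auto simp: field_simps)
  finally show ?thesis by simp
qed

lemma geo_bound:
  fixes q :: real
  assumes "0 \<le> q" "q < 1"
  shows "(\<Sum>n=2..N. q^n) \<le> q^2 / (1 - q)"
proof (cases "N < 2")
  case True then show ?thesis using assms by simp
next
  case False
  then have "(\<Sum>n=2..N. q^n) = (q^2 - q^Suc N) / (1 - q)"
    using assms by (subst sum_gp) auto
  also have "\<dots> \<le> q^2 / (1 - q)" using assms by (intro divide_right_mono) auto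
  finally show ?thesis .
qed

lemma hk_diff:
  assumes "1 - z \<noteq> 0" "k \<ge> 1"
  shows "hk (2*k) z + (-1) * hk k z =
     (Ln (1 - z^(2*k)) - Ln (1 - z^k)) / (1 - z) - complex_of_real (ln 2) / (1 - z)"
proof -
  have "ln (real (2*k)) = ln 2 + ln (real k)" using assms(2) by (simp add: ln_mult)
  then show ?thesis unfolding hk_def using assms(1)
    by (simp add: field_simps)
qed

lemma near_inv:
  assumes r: "0 < r" "r < 1"
  shows "near r (\<lambda>z. 1 / (1 - z)) 0"
proof -
  have "near r (\<lambda>z. - complex_of_real (ln 2) / (1 - z)) 0"
  proof (rule near_limit)
    fix d :: real assume "d > 0"
    obtain k where k: "k \<ge> 2" "r^k < min (1/2) (d * (1 - r) / 4)"
      using pow_small[of r "min (1/2) (d * (1 - r) / 4)" 2] r \<open>d > 0\<close> by auto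
    have rk: "r^(2*k) \<le> r^k" using r by (intro power_decreasing) auto
    have s1: "(\<lambda>z. hk (2*k) z) \<in> span_hk" using span_hk1[of "2*k" 1] k by simp
    have sp: "near r (\<lambda>z. hk (2*k) z + (-1) * hk k z) 0"
      by (rule near_span, rule span_add[OF s1], rule span_hk1) (use k in auto)
    have "near r (\<lambda>z. - complex_of_real (ln 2) / (1 - z)) (0 + 4 * r^k / (1 - r))"
    proof (rule near_close[OF sp])
      fix z :: complex assume z: "z \<in> cball 0 r"
      have nz: "1 - z \<noteq> 0" using div_bound[OF z r(2)] by auto
      have "hk (2*k) z + (-1) * hk k z - - complex_of_real (ln 2) / (1 - z)
          = (Ln (1 - z^(2*k)) - Ln (1 - z^k)) / (1 - z)"
        using hk_diff[OF nz, of k] k by (simp add: field_simps)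
      moreover have "cmod ((Ln (1 - z^(2*k)) - Ln (1 - z^k)) / (1 - z)) \<le>
             cmod (Ln (1 - z^(2*k)) - Ln (1 - z^k)) / (1 - r)"
        using div_bound[OF z r(2)] by auto
      moreover have "cmod (Ln (1 - z^(2*k)) - Ln (1 - z^k)) \<le> 2 * r^(2*k) + 2 * r^k"
      proof -
        have "cmod (Ln (1 - z^(2*k))) \<le> 2 * r^(2*k)"
        proof -
          have "r^(2*k) < 1/2" using rk k by linarith
          then show ?thesis using Ln_small[OF z, of "2*k"] r k by auto
        qed
        moreover have "cmod (Ln (1 - z^k)) \<le> 2 * r^k"
          using Ln_small[OF z, of k] r k by auto
        ultimately show ?thesis by (smt (verit) norm_triangle_ineq4)
      qed
      ultimately show "cmod (hk (2*k) z + (-1) * hk k z - - complex_of_real (ln 2) / (1 - z))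
                \<le> 4 * r^k / (1 - r)"
        using rk r by (smt (verit, best) divide_right_mono)
    qed
    moreover have "4 * r^k / (1 - r) \<le> d"
      using k r by (simp add: field_simps)
    ultimately show "near r (\<lambda>z. - complex_of_real (ln 2) / (1 - z)) (0 + d)"
      by (simp add: near_mono)
  qed
  from near_scale[OF this, of "- 1 / complex_of_real (ln 2)"]
  have "near r (\<lambda>z. (- 1 / complex_of_real (ln 2)) * (- complex_of_real (ln 2) / (1 - z))) 0"
    by simp
  then show ?thesis by (rule near_cong) simp
qed

definition u :: "nat \<Rightarrow> complex \<Rightarrow> complex" where
  "u k z = (Ln (1 - z^k) - Ln (1 - z)) / (1 - z)"

lemma near_u:
  assumes r: "0 < r" "r < 1" and k: "k \<ge> 2"
  shows "near r (u k) 0"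
proof -
  have "near r (\<lambda>z. hk k z + complex_of_real (ln (real k)) * (1 / (1 - z))) (0 + cmod (complex_of_real (ln (real k))) * 0)"
    by (rule near_add[OF near_span[OF span_hk1[OF k, of 1, simplified]] near_scale[OF near_inv[OF r]]])
  then have "near r (\<lambda>z. hk k z + complex_of_real (ln (real k)) * (1 / (1 - z))) 0" by simp
  then show ?thesis
  proof (rule near_cong)
    fix z :: complex assume z: "z \<in> cball 0 r"
    have nz: "1 - z \<noteq> 0" using div_bound[OF z r(2)] by auto
    show "hk k z + complex_of_real (ln (real k)) * (1 / (1 - z)) = u k z"
      unfolding hk_def u_def by (simp add: diff_divide_distrib)
  qed
qed

definition L :: "nat \<Rightarrow> complex \<Rightarrow> complex" where
  "L k z = Ln (1 - z^k) / (1 - z)"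

lemma L_small:
  assumes r: "0 < r" "r < 1" and z: "z \<in> cball 0 r" and "k \<ge> 1" "r^k < 1/2"
  shows "cmod (L k z) \<le> 2 * r^k / (1 - r)"
proof -
  have "cmod (L k z) \<le> cmod (Ln (1 - z^k)) / (1 - r)" unfolding L_def using div_bound[OF z r(2)] by auto
  also have "\<dots> \<le> 2 * r^k / (1 - r)" using Ln_small[OF z, of k] assms by (intro divide_right_mono) auto
  finally show ?thesis .
qed

lemma near_L2:
  assumes r: "0 < r" "r < 1" and k: "k \<ge> 2"
  shows "near r (L k) 0"
proof (rule near_limit)
  fix d :: real assume "d > 0"
  obtain m where m: "m \<ge> 2" "r^m < min (1/2) (d * (1 - r) / 2)"
    using pow_small[of r "min (1/2) (d * (1 - r) / 2)" 2] r \<open>d > 0\<close> by auto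
  have "near r (\<lambda>z. u k z + (-1) * u m z) (0 + cmod (-1::complex) * 0)"
    by (rule near_add[OF near_u[OF r k] near_scale[OF near_u[OF r m(1)]]])
  then have "near r (\<lambda>z. u k z + (-1) * u m z) 0" by simp
  then have "near r (L k) (0 + 2 * r^m / (1 - r))"
  proof (rule near_close)
    fix z :: complex assume z: "z \<in> cball 0 r"
    have nz: "1 - z \<noteq> 0" using div_bound[OF z r(2)] by auto
    have "u k z + (-1) * u m z - L k z = - L m z"
      unfolding u_def L_def by (simp add: diff_divide_distrib algebra_simps)
    then show "cmod (u k z + (-1) * u m z - L k z) \<le> 2 * r^m / (1 - r)"
      using L_small[OF r z, of m] m by simp
  qed
  moreover have "2 * r^m / (1 - r) \<le> d" using m r by (simp add: field_simps)
  ultimately show "near r (L k) (0 + d)" by (simp add: near_mono)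
qed

lemma near_L:
  assumes r: "0 < r" "r < 1" and k: "k \<ge> 1"
  shows "near r (L k) 0"
proof (cases "k = 1")
  case False then show ?thesis using near_L2[OF r] k by simp
next
  case True
  have "near r (\<lambda>z. L 2 z + (-1) * u 2 z) (0 + cmod (-1::complex) * 0)"
    by (rule near_add[OF near_L2[OF r] near_scale[OF near_u[OF r]]]) auto
  then have "near r (\<lambda>z. L 2 z + (-1) * u 2 z) 0" by simp
  then show ?thesis
  proof (rule near_cong)
    fix z :: complex assume z: "z \<in> cball 0 r"
    have nz: "1 - z \<noteq> 0" using div_bound[OF z r(2)] by auto
    show "L 2 z + (-1) * u 2 z = L k z"
      unfolding u_def L_def True by (simp add: diff_divide_distrib)
  qed
qed

definition G :: "nat \<Rightarrow> complex \<Rightarrow> complex" where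
  "G j z = z^j / (1 - z)"

lemma near_G_iter:
  assumes r: "0 < r" "r < 1"
  shows "j \<ge> 1 \<Longrightarrow> near r (G j) ((1/(1-r))^(t+1) * (r^j)^(2^t))"
proof (induction t arbitrary: j)
  case 0
  show ?case
  proof (rule near_zero)
    fix z :: complex assume z: "z \<in> cball 0 r"
    have "cmod (G j z) \<le> cmod (z^j) / (1 - r)" unfolding G_def using div_bound[OF z r(2)] by auto
    also have "\<dots> \<le> r^j / (1 - r)"
      using z r by (intro divide_right_mono) (auto simp: norm_power power_mono)
    finally show "cmod (G j z) \<le> (1/(1-r))^(0+1) * (r^j)^(2^0)" by simp
  qed
next
  case (Suc t)
  define M where "M = 1/(1-r)"
  have M: "M > 0" using r by (simp add: M_def)
  define q where "q = (r^j)^(2^t)"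
  have rj: "r^j \<le> r" using Suc.prems r by (intro power_decreasing[of 1 j r, simplified]) auto
  have q0: "0 \<le> q" using r by (simp add: q_def)
  have qr: "q \<le> r^j" unfolding q_def using r by (intro power_decreasing[of 1 "2^t" "r^j", simplified]) (auto intro: power_le_one)
  have q1: "q < 1" using qr rj r by linarith
  have qM: "1 / (1 - q) \<le> M" unfolding M_def using qr rj r q1 by (intro divide_left_mono) auto
  show ?case
  proof (rule near_limit[where e="M^(Suc t + 1) * (r^j)^(2^Suc t)", unfolded M_def])
    fix d :: real assume "d > 0"
    obtain N where N: "N \<ge> 1" "r^N < d / M^2"
      using pow_small[of r "d / M^2" 1] r \<open>d > 0\<close> M by auto
    define H where "H = (\<lambda>z. (-1) * L j z + (\<Sum>n\<in>{2..N}. (- (1 / of_nat n)) * G (j*n) z))"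
    have nH: "near r H (cmod (-1::complex) * 0 + (\<Sum>n\<in>{2..N}. cmod (- (1 / of_nat n :: complex)) * (M^(t+1) * (r^(j*n))^(2^t))))"
      unfolding H_def M_def
    proof (rule near_add[OF near_scale[OF near_L[OF r Suc.prems]]], rule near_sum)
      fix n assume n: "n \<in> {2..N}"
      then have "j * n \<ge> 1" using Suc.prems by simp
      then show "near r (\<lambda>z. - (1 / of_nat n) * G (j * n) z)
             (cmod (- (1 / of_nat n :: complex)) * ((1 / (1 - r)) ^ (t + 1) * (r ^ (j * n)) ^ 2 ^ t))"
        by (rule near_scale[OF Suc.IH])
    qed simp
    have "near r (G j) (cmod (-1::complex) * 0 + (\<Sum>n\<in>{2..N}. cmod (- (1 / of_nat n :: complex)) * (M^(t+1) * (r^(j*n))^(2^t)))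
         + M^2 * r^N)"
    proof (rule near_close[OF nH])
      fix z :: complex assume z: "z \<in> cball 0 r"
      have nz: "1 - z \<noteq> 0" using div_bound[OF z r(2)] by auto
      define w where "w = z^j"
      have wr: "cmod w \<le> r" unfolding w_def using z rj r
        by (metis mem_cball_0 norm_ge_zero norm_power order_trans power_mono)
      have w1: "cmod w < 1" using wr r by linarith
      define E where "E = Ln (1 - w) + (\<Sum>k=1..N. w ^ k / of_nat k)"
      have "(\<Sum>k=1..N. w ^ k / of_nat k) = w + (\<Sum>k=2..N. w ^ k / of_nat k)"
        using N(1) by (subst sum.atLeast_Suc_atMost) (auto simp: numeral_2_eq_2)
      then have Eeq: "w = E - Ln (1 - w) - (\<Sum>k=2..N. w ^ k / of_nat k)" unfolding E_def by simp
      have "H z - G j z = - E / (1 - z)"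
      proof -
        have tm: "- (1 / of_nat n) * G (j*n) z = - ((w^n / of_nat n) / (1 - z))" for n
        proof -
          have "z^(j*n) = w^n" unfolding w_def by (rule power_mult)
          then show ?thesis unfolding G_def by simp
        qed
        have "H z = - Ln (1 - w) / (1 - z) + (\<Sum>n\<in>{2..N}. - ((w^n / of_nat n) / (1 - z)))"
          unfolding H_def tm unfolding L_def w_def by simp
        also have "\<dots> = - Ln (1 - w) / (1 - z) - (\<Sum>n\<in>{2..N}. (w^n / of_nat n) / (1 - z))"
          by (simp add: sum_negf)
        finally have "H z = - Ln (1 - w) / (1 - z) - (\<Sum>n\<in>{2..N}. (w^n / of_nat n) / (1 - z))" .
        moreover have "\<dots> = (- Ln (1 - w) - (\<Sum>n\<in>{2..N}. w^n / of_nat n)) / (1 - z)"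
          by (simp add: sum_divide_distrib diff_divide_distrib)
        ultimately have "H z = (- Ln (1 - w) - (\<Sum>n\<in>{2..N}. w^n / of_nat n)) / (1 - z)" by (rule trans)
        moreover have "G j z = (E - Ln (1 - w) - (\<Sum>k=2..N. w ^ k / of_nat k)) / (1 - z)"
          unfolding G_def using Eeq w_def by simp
        ultimately show ?thesis by (simp add: diff_divide_distrib)
      qed
      then have "cmod (H z - G j z) \<le> cmod E / (1 - r)"
        using div_bound(2)[OF z r(2), of "-E"] by simp
      also have "\<dots> \<le> (cmod w ^ Suc N / (1 - cmod w)) / (1 - r)"
        unfolding E_def using Ln_series_bound[OF w1, of N] r by (intro divide_right_mono) auto
      also have "\<dots> \<le> (r ^ Suc N * M) * M"
      proof -
        have "cmod w ^ Suc N \<le> r ^ Suc N" using wr by (intro power_mono) auto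
        moreover have "1 / (1 - cmod w) \<le> M" unfolding M_def using wr r w1 by (intro divide_left_mono) auto
        ultimately have "cmod w ^ Suc N * (1 / (1 - cmod w)) \<le> r ^ Suc N * M"
          using r w1 by (intro mult_mono) auto
        then have "cmod w ^ Suc N / (1 - cmod w) \<le> r ^ Suc N * M" by simp
        then show ?thesis unfolding M_def using r by (simp add: divide_right_mono divide_inverse)
      qed
      also have "\<dots> \<le> M^2 * r^N"
        using r M by (simp add: power2_eq_square mult_left_mono algebra_simps)
      finally show "cmod (H z - G j z) \<le> M^2 * r^N" .
    qed
    moreover have "(\<Sum>n\<in>{2..N}. cmod (- (1 / of_nat n :: complex)) * (M^(t+1) * (r^(j*n))^(2^t)))
        \<le> M^(Suc t + 1) * (r^j)^(2^Suc t)"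
    proof -
      have "(\<Sum>n\<in>{2..N}. cmod (- (1 / of_nat n :: complex)) * (M^(t+1) * (r^(j*n))^(2^t)))
          \<le> (\<Sum>n\<in>{2..N}. M^(t+1) * q^n)"
      proof (rule sum_mono)
        fix n assume n: "n \<in> {2..N}"
        have e: "(r^(j*n))^(2^t) = q^n" unfolding q_def by (simp add: power_mult[symmetric] mult_ac)
        have "cmod (- (1 / of_nat n :: complex)) \<le> 1" using n by (simp add: norm_divide)
        then show "cmod (- (1 / of_nat n :: complex)) * (M^(t+1) * (r^(j*n))^(2^t)) \<le> M^(t+1) * q^n"
          unfolding e using M q0 mult_right_mono[of _ 1 "M^(t+1) * q^n"] by simp
      qed
      also have "\<dots> = M^(t+1) * (\<Sum>n\<in>{2..N}. q^n)" by (simp add: sum_distrib_left)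
      also have "\<dots> \<le> M^(t+1) * (q^2 / (1 - q))"
        using geo_bound[OF q0 q1] M by (intro mult_left_mono) auto
      also have "\<dots> \<le> M^(t+1) * (q^2 * M)"
        using qM q0 q1 M by (intro mult_left_mono) (auto simp: divide_inverse mult_left_mono)
      also have "\<dots> = M^(Suc t + 1) * (r^j)^(2^Suc t)"
        unfolding q_def by (simp add: power_mult[symmetric] mult_ac)
      finally show ?thesis .
    qed
    moreover have "M^2 * r^N \<le> d" using N M by (simp add: field_simps)
    ultimately show "near r (G j) ((1 / (1 - r)) ^ (Suc t + 1) * (r ^ j) ^ 2 ^ Suc t + d)"
      unfolding M_def by (elim near_mono) simp
  qed
qed

lemma seq_to_zero:
  fixes r :: real
  assumes r: "0 < r" "r < 1"
  shows "(\<lambda>t. (1/(1-r))^(t+1) * r^(2^t)) \<longlonglongrightarrow> 0"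
proof -
  define M where "M = 1/(1-r)"
  have M: "M > 0" using r by (simp add: M_def)
  obtain N where N: "N \<ge> 0" "r^N < 1 / (2*M)"
    using pow_small[of r "1/(2*M)" 0] r M by auto
  have "summable (\<lambda>t. M^(t+1) * r^(2^t))"
  proof (rule summable_ratio_test[of "1/2" N])
    fix n assume n: "n \<ge> N"
    have "r^(2^n) \<le> r^n" using r less_exp[of n] by (intro power_decreasing) auto
    also have "\<dots> \<le> r^N" using r n by (intro power_decreasing) auto
    finally have "M * r^(2^n) \<le> M * (1/(2*M))" using N M by (intro mult_left_mono) auto
    then have c: "M * r^(2^n) \<le> 1/2" using M by simp
    have "M^(Suc n + 1) * r^(2^Suc n) = (M * r^(2^n)) * (M^(n+1) * r^(2^n))"
      by (simp add: power_mult[symmetric] mult_ac power2_eq_square[symmetric])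
    also have "\<dots> \<le> 1/2 * (M^(n+1) * r^(2^n))"
      using c M r by (intro mult_right_mono) auto
    finally show "norm (M^(Suc n + 1) * r^(2^Suc n)) \<le> 1/2 * norm (M^(n+1) * r^(2^n))"
      using M r by simp
  qed simp
  then show ?thesis unfolding M_def by (rule summable_LIMSEQ_zero)
qed

lemma near_G:
  assumes r: "0 < r" "r < 1"
  shows "near r (G j) 0"
proof (cases "j = 0")
  case True
  show ?thesis
  proof (rule near_cong[OF near_inv[OF r]])
    fix z :: complex show "1 / (1 - z) = G j z" unfolding G_def True by simp
  qed
next
  case False
  then have j: "j \<ge> 1" by simp
  show ?thesis
  proof (rule near_limit)
    fix d :: real assume "d > 0"
    have "eventually (\<lambda>t. (1/(1-r))^(t+1) * r^(2^t) < d) sequentially"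
      using seq_to_zero[OF r] \<open>d > 0\<close> by (rule order_tendstoD(2))
    then obtain t where t: "(1/(1-r))^(t+1) * r^(2^t) < d"
      by (auto simp: eventually_sequentially)
    have rj: "r^j \<le> r" using j r by (intro power_decreasing[of 1 j r, simplified]) auto
    have "(1/(1-r))^(t+1) * (r^j)^(2^t) \<le> (1/(1-r))^(t+1) * r^(2^t)"
      using r rj by (intro mult_left_mono power_mono) auto
    then show "near r (G j) (0 + d)"
      using near_G_iter[OF r j, of t] t by (elim near_mono) simp
  qed
qed

lemma near_holo:
  assumes hol: "f holomorphic_on ball 0 1" and r: "0 < r" "r < 1"
  shows "near r f 0"
proof -
  define \<phi> where "\<phi> = (\<lambda>z. (1 - z) * f z)"
  have holp: "\<phi> holomorphic_on ball 0 1" unfolding \<phi>_def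
    by (intro holomorphic_intros hol)
  define a where "a = (\<lambda>n. (deriv ^^ n) \<phi> 0 / fact n)"
  have sums: "(\<lambda>n. a n * (w - 0)^n) sums \<phi> w" if "w \<in> ball 0 1" for w
    unfolding a_def by (rule holomorphic_power_series[OF holp that])
  define \<rho> where "\<rho> = (1 + r) / 2"
  have \<rho>: "r < \<rho>" "\<rho> < 1" using r by (auto simp: \<rho>_def)
  have "summable (\<lambda>n. a n * (complex_of_real \<rho>)^n)"
    using sums[of "complex_of_real \<rho>"] \<rho> r by (auto simp: sums_iff)
  then have "norm (complex_of_real \<rho>) \<le> conv_radius a" by (rule conv_radius_geI)
  then have le: "ereal \<rho> \<le> conv_radius a" using \<rho> r by simp
  have "ereal r < ereal \<rho>" using \<rho> by simp
  then have rc: "ereal r < conv_radius a" using le by (rule less_le_trans)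
  have ul: "uniform_limit (cball 0 r) (\<lambda>n x. \<Sum>i<n. a i * (x - 0) ^ i) (\<lambda>x. suminf (\<lambda>i. a i * (x - 0) ^ i)) sequentially"
    by (rule powser_uniform_limit[OF rc])
  show ?thesis
  proof (rule near_limit)
    fix d :: real assume "d > 0"
    then have d': "d * (1 - r) > 0" using r by simp
    obtain N where N: "\<forall>n\<ge>N. \<forall>x\<in>cball 0 r. dist (\<Sum>i<n. a i * (x - 0) ^ i) (suminf (\<lambda>i. a i * (x - 0) ^ i)) < d * (1 - r)"
      using ul d' unfolding uniform_limit_sequentially_iff by blast
    have nP: "near r (\<lambda>z. \<Sum>i\<in>{..<N}. a i * G i z) (\<Sum>i\<in>{..<N}. cmod (a i) * 0)"
    proof (rule near_sum)
      fix i show "near r (\<lambda>z. a i * G i z) (cmod (a i) * 0)" by (rule near_scale[OF near_G[OF r]])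
    qed simp
    have "near r f ((\<Sum>i\<in>{..<N}. cmod (a i) * 0) + d)"
    proof (rule near_close[OF nP])
      fix z :: complex assume z: "z \<in> cball 0 r"
      have nz: "1 - z \<noteq> 0" using div_bound[OF z r(2)] by auto
      have zb: "z \<in> ball 0 1" using z r by auto
      have se: "suminf (\<lambda>i. a i * (z - 0) ^ i) = \<phi> z" using sums[OF zb] by (simp add: sums_iff)
      have "dist (\<Sum>i<N. a i * (z - 0) ^ i) (suminf (\<lambda>i. a i * (z - 0) ^ i)) < d * (1 - r)"
        using N z by blast
      then have dd: "cmod ((\<Sum>i<N. a i * z ^ i) - \<phi> z) < d * (1 - r)"
        unfolding se by (simp add: dist_norm)
      have "(\<Sum>i\<in>{..<N}. a i * G i z) - f z = ((\<Sum>i<N. a i * z ^ i) - \<phi> z) / (1 - z)"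
        unfolding G_def \<phi>_def using nz
        by (simp add: sum_divide_distrib[symmetric] diff_divide_distrib times_divide_eq_right)
      then have "cmod ((\<Sum>i\<in>{..<N}. a i * G i z) - f z) \<le> cmod ((\<Sum>i<N. a i * z ^ i) - \<phi> z) / (1 - r)"
        using div_bound(2)[OF z r(2)] by simp
      also have "\<dots> \<le> d" using dd r by (simp add: divide_le_eq)
      finally show "cmod ((\<Sum>i\<in>{..<N}. a i * G i z) - f z) \<le> d" .
    qed
    then show "near r f (0 + d)" by simp
  qed
qed

theorem mainTheorem10:
  fixes f :: "complex \<Rightarrow> complex"
  assumes "f \<in> hardy2"
  shows "\<exists>p :: nat \<Rightarrow> complex \<Rightarrow> complex. (\<forall>j. p j \<in> span_hk) \<and>
           (\<forall>K. compact K \<and> K \<subseteq> ball 0 1 \<longrightarrow> uniform_limit K p f sequentially)"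
proof -
  have hol: "f holomorphic_on ball 0 1" using assms unfolding hardy2_def by simp
  define rr where "rr = (\<lambda>j::nat. 1 - 1 / (real j + 2))"
  have rr: "0 < rr j" "rr j < 1" for j unfolding rr_def by (auto simp: field_simps)
  have "\<forall>j. \<exists>p. p \<in> span_hk \<and> (\<forall>z\<in>cball 0 (rr j). cmod (p z - f z) \<le> 0 + 1 / (real j + 1))"
  proof
    fix j
    have "1 / (real j + 1) > 0" by simp
    from nearD[OF near_holo[OF hol rr] this]
    show "\<exists>p. p \<in> span_hk \<and> (\<forall>z\<in>cball 0 (rr j). cmod (p z - f z) \<le> 0 + 1 / (real j + 1))"
      by blast
  qed
  then obtain P where P: "\<And>j. P j \<in> span_hk"
    "\<And>j z. z \<in> cball 0 (rr j) \<Longrightarrow> cmod (P j z - f z) \<le> 1 / (real j + 1)"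
    by (metis add_0)
  have "uniform_limit K P f sequentially" if K: "compact K" "K \<subseteq> ball 0 1" for K
  proof (cases "K = {}")
    case True then show ?thesis by (simp add: uniform_limit_sequentially_iff)
  next
    case False
    have "continuous_on K norm" by (intro continuous_intros)
    then obtain x where x: "x \<in> K" "\<And>y. y \<in> K \<Longrightarrow> norm y \<le> norm x"
      using continuous_attains_sup[OF K(1) False] by blast
    define R where "R = norm x"
    have R: "R < 1" using x K unfolding R_def by auto
    show ?thesis unfolding uniform_limit_sequentially_iff
    proof (intro allI impI)
      fix e :: real assume e: "e > 0"
      obtain N :: nat where N: "real N > max (1/e) (1/(1-R))" using reals_Archimedean2 by blast
      have "\<forall>n\<ge>N. \<forall>y\<in>K. dist (P n y) (f y) < e"
      proof (intro allI impI ballI)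
        fix n y assume n: "n \<ge> N" and y: "y \<in> K"
        have nN: "real n \<ge> real N" using n by simp
        have "1 / (real n + 2) \<le> 1 - R"
        proof -
          have "1/(1-R) < real n + 2" using N nN by linarith
          then show ?thesis using R by (simp add: field_simps)
        qed
        then have "R \<le> rr n" unfolding rr_def by linarith
        then have "y \<in> cball 0 (rr n)" using x(2)[OF y] unfolding R_def by simp
        then have "cmod (P n y - f y) \<le> 1 / (real n + 1)" by (rule P(2))
        also have "\<dots> < e"
        proof -
          have "1/e < real n + 1" using N nN by linarith
          then show ?thesis using e by (simp add: field_simps)
        qed
        finally show "dist (P n y) (f y) < e" by (simp add: dist_norm)
      qed
      then show "\<exists>N. \<forall>n\<ge>N. \<forall>y\<in>K. dist (P n y) (f y) < e" by blast
    qed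
  qed
  then show ?thesis using P(1) by blast
qed

end
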